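(* Let $F:\mathbb{R}^n\to\mathbb{R}^n$ be locally Lipschitz, $X^*=\{x:F(x)=0\}$, $x^*\in X^*$, $\mathcal{M}$ a smooth embedded submanifold of $\mathbb{R}^n$ containing $x^*$, and $\tilde X^*=X^*\cap\mathcal{M}$. Assume (A1), (A2), (A3) below, and let $b$ be as defined below. Let $q\in(1,2]$, $L_3>0$. For $x_k\in\mathcal{M}$ let $\mu_k=\|F(x_k)\|$, $J_k\in\partial_BF(x_k)$, $P_k=P(x_k)$, and let $d_k$ satisfy $(J_kP_k+\mu_kI)d_k=-F(x_k)+r_k$ where $\|r_k\|/\mu_k\le L_3\|F(x_k)\|^q$. Then there is a constant $c_1>0$ such that whenever $x_k\in\mathcal{M}\cap\bar B(x^*,b/2)$, $$\|d_k\|\le c_1\,\mathrm{dist}(x_k,\tilde X^* )+\mu_k^{-1}\|r_k\|.$$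
   Context: $\partial_BF(x)=\{\lim_kJ(x^k):x^k\to x, F \text{ differentiable at } x^k\}$ (B-Jacobian). $P(x)$ is the matrix of the orthogonal projection onto the tangent space $T_x\mathcal{M}$. (A1): there are $b_1>0$, $L_2>0$ such that $F$ is $L_2$-Lipschitz on $\bar B(x^*,b_1)$, and a constant $L_1>0$ such that for all $x,y\in\mathcal{M}\cap\bar B(x^*,b_1)$ and every $J(x)\in\partial_BF(x)$: $\|F(y)-F(x)-J(x)(y-x)\|\le L_1\|y-x\|^2$ and $\|F(y)-F(x)-J(x)P(x)(y-x)\|\le L_1\|y-x\|^2$. (A2): there is $b_2>0$ such that for all $x\in\mathcal{M}\cap\bar B(x^*,b_2)$ and all $J(x)\in\partial_BF(x)$, $\|(J(x)P(x)+\mu(x)I)^{-1}\|\le\mu(x)^{-1}$, $\mu(x)=\|F(x)\|$. (A3): there are $b_3>0$, $\gamma>0$ with $\|F(x)\|\ge\gamma\,\mathrm{dist}(x,\tilde X^* )$ for all $x\in\mathcal{M}\cap\bar B(x^*,b_3)$. Set $b=\min\{b_2,b_3,\gamma b_1/(2L_1+2L_2+2\gamma+2L_3L_2^q\gamma),1,\gamma/(L_1+L_2+\gamma+L_3L_2^q\gamma)\}$. *)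

theory Defs
  imports "HOL-Analysis.Analysis"
begin

text \<open>f is C^0 on U iff continuous; f is C^(k+1) on the open set U iff f is
  differentiable on U and, for every direction v, the map x |-> Df(x) v is C^k on U.
  (In finite dimensions this is the usual notion.)\<close>

fun Ck_on :: "nat \<Rightarrow> ('a::euclidean_space) set \<Rightarrow> ('a \<Rightarrow> 'b::euclidean_space) \<Rightarrow> bool" where
  "Ck_on 0 U f = continuous_on U f"
| "Ck_on (Suc k) U f =
     ((\<forall>x\<in>U. f differentiable (at x)) \<and>
      (\<forall>v. Ck_on k U (\<lambda>x. frechet_derivative f (at x) v)))"

definition smooth_on :: "('a::euclidean_space) set \<Rightarrow> ('a \<Rightarrow> 'b::euclidean_space) \<Rightarrow> bool" where
  "smooth_on U f \<longleftrightarrow> (\<forall>k. Ck_on k U f)"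

definition embedded_submanifold :: "(real^'n) set \<Rightarrow> bool" where
  "embedded_submanifold M \<longleftrightarrow>
    (\<forall>p\<in>M. \<exists>U V (\<phi>::real^'n \<Rightarrow> real^'n) \<psi> S.
        open U \<and> p \<in> U \<and> open V \<and> subspace S \<and>
        smooth_on U \<phi> \<and> smooth_on V \<psi> \<and> \<phi> ` U = V \<and>
        (\<forall>x\<in>U. \<psi> (\<phi> x) = x) \<and> (\<forall>y\<in>V. \<phi> (\<psi> y) = y) \<and>
        \<phi> ` (M \<inter> U) = V \<inter> S)"

definition tangent_space :: "(real^'n) set \<Rightarrow> real^'n \<Rightarrow> (real^'n) set" where
  "tangent_space M x = {v. \<exists>(c::real \<Rightarrow> real^'n) e. e > 0 \<and> c 0 = x \<and>
       (\<forall>t. \<bar>t\<bar> < e \<longrightarrow> c t \<in> M) \<and> (c has_vector_derivative v) (at 0)}"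

definition is_orth_proj_matrix :: "(real^'n) set \<Rightarrow> real^'n^'n \<Rightarrow> bool" where
  "is_orth_proj_matrix T A \<longleftrightarrow> (\<forall>v. A *v v \<in> T \<and> (\<forall>w\<in>T. (v - A *v v) \<bullet> w = 0))"

definition tangent_proj :: "(real^'n) set \<Rightarrow> real^'n \<Rightarrow> real^'n^'n" where
  "tangent_proj M x = (THE A. is_orth_proj_matrix (tangent_space M x) A)"

definition jacobian_mat :: "(real^'n \<Rightarrow> real^'m) \<Rightarrow> real^'n \<Rightarrow> real^'n^'m" where
  "jacobian_mat F x = matrix (frechet_derivative F (at x))"

definition B_jacobian :: "(real^'n \<Rightarrow> real^'m) \<Rightarrow> real^'n \<Rightarrow> (real^'n^'m) set" where
  "B_jacobian F x = {J. \<exists>xs::nat \<Rightarrow> real^'n. xs \<longlonglongrightarrow> x \<and>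
       (\<forall>k. F differentiable (at (xs k))) \<and> (\<lambda>k. jacobian_mat F (xs k)) \<longlonglongrightarrow> J}"

definition locally_lipschitz :: "('a::metric_space \<Rightarrow> 'b::metric_space) \<Rightarrow> bool" where
  "locally_lipschitz F \<longleftrightarrow> (\<forall>x. \<exists>e>0. \<exists>L. L-lipschitz_on (ball x e) F)"

end

theory Submission
  imports Defs
begin


lemma infdist_approx:
  fixes A :: "'a::metric_space set"
  assumes "A \<noteq> {}" "e > 0"
  shows "\<exists>a\<in>A. dist x a < infdist x A + e"
proof -
  have "infdist x A = (INF a\<in>A. dist x a)" using assms infdist_notempty by blast
  moreover have "(INF a\<in>A. dist x a) < infdist x A + e" using calculation assms by simp
  ultimately show ?thesis
    by (metis (no_types, lifting) assms(1) bdd_below_image_dist cINF_less_iff)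
qed

lemma inv_props:
  fixes A :: "real^'n^'n"
  assumes "invertible A"
  shows "A ** matrix_inv A = mat 1 \<and> matrix_inv A ** A = mat 1"
  using assms unfolding invertible_def matrix_inv_def by (rule someI_ex)

lemma mat_scale_mult: "((c::real) *\<^sub>R mat 1 :: real^'n^'n) *v v = c *\<^sub>R v"
proof -
  have "((c::real) *\<^sub>R mat 1 :: real^'n^'n) = c *\<^sub>R mat 1" by simp
  then show ?thesis by (metis matrix_vector_mul_lid scaleR_matrix_vector_assoc)
qed

theorem lemma5p2:
  fixes F :: "real^'n \<Rightarrow> real^'n"
    and M :: "(real^'n) set"
    and xs :: "real^'n"
    and b1 b2 b3 L1 L2 L3 \<gamma> q b :: real
  assumes F_loc_lip: "locally_lipschitz F"
    and xs_sol: "F xs = 0"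
    and M_sub: "embedded_submanifold M"
    and xs_M: "xs \<in> M"
    \<comment> \<open>(A1)\<close>
    and A1_pos: "b1 > 0" "L1 > 0" "L2 > 0"
    and A1_lip: "L2-lipschitz_on (cball xs b1) F"
    and A1_J: "\<And>x y J. x \<in> M \<inter> cball xs b1 \<Longrightarrow> y \<in> M \<inter> cball xs b1 \<Longrightarrow> J \<in> B_jacobian F x \<Longrightarrow>
                 norm (F y - F x - J *v (y - x)) \<le> L1 * (norm (y - x))\<^sup>2"
    and A1_JP: "\<And>x y J. x \<in> M \<inter> cball xs b1 \<Longrightarrow> y \<in> M \<inter> cball xs b1 \<Longrightarrow> J \<in> B_jacobian F x \<Longrightarrow>
                 norm (F y - F x - (J ** tangent_proj M x) *v (y - x)) \<le> L1 * (norm (y - x))\<^sup>2"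
    \<comment> \<open>(A2), required where \<mu>(x) = norm (F x) > 0\<close>
    and A2_pos: "b2 > 0"
    and A2: "\<And>x J. x \<in> M \<inter> cball xs b2 \<Longrightarrow> F x \<noteq> 0 \<Longrightarrow> J \<in> B_jacobian F x \<Longrightarrow>
               invertible (J ** tangent_proj M x + norm (F x) *\<^sub>R mat 1) \<and>
               onorm (\<lambda>v. matrix_inv (J ** tangent_proj M x + norm (F x) *\<^sub>R mat 1) *v v)
                 \<le> 1 / norm (F x)"
    \<comment> \<open>(A3)\<close>
    and A3_pos: "b3 > 0" "\<gamma> > 0"
    and A3: "\<And>x. x \<in> M \<inter> cball xs b3 \<Longrightarrow>
               norm (F x) \<ge> \<gamma> * infdist x ({z. F z = 0} \<inter> M)"
    and q: "1 < q" "q \<le> 2"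
    and L3: "L3 > 0"
    and b_def: "b = Min {b2, b3,
                  \<gamma> * b1 / (2*L1 + 2*L2 + 2*\<gamma> + 2*L3 * L2 powr q * \<gamma>), 1,
                  \<gamma> / (L1 + L2 + \<gamma> + L3 * L2 powr q * \<gamma>)}"
  shows "\<exists>c1>0. \<forall>x J d r.
           x \<in> M \<inter> cball xs (b/2) \<longrightarrow> F x \<noteq> 0 \<longrightarrow> J \<in> B_jacobian F x \<longrightarrow>
           (J ** tangent_proj M x + norm (F x) *\<^sub>R mat 1) *v d = - F x + r \<longrightarrow>
           norm r / norm (F x) \<le> L3 * norm (F x) powr q \<longrightarrow>
           norm d \<le> c1 * infdist x ({z. F z = 0} \<inter> M) + norm r / norm (F x)"
proof -
  define K where "K = L1 + L2 + \<gamma> + L3 * L2 powr q * \<gamma>"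
  have Kpos: "K > \<gamma>" unfolding K_def using A1_pos A3_pos L3 by (simp add: add_pos_pos)
  have bK: "b = Min {b2, b3, \<gamma> * b1 / (2 * K), 1, \<gamma> / K}"
    unfolding b_def K_def by (simp add: algebra_simps)
  have bb2: "b \<le> b2" and bb3: "b \<le> b3" and bb4: "b \<le> \<gamma> * b1 / (2 * K)"
    unfolding bK by simp_all
  have Bpos: "b > 0" unfolding bK using A2_pos A3_pos A1_pos Kpos by simp
  have "\<gamma> * b1 / (2 * K) \<le> b1 / 2"
    using Kpos A1_pos A3_pos by (simp add: field_simps)
  hence bb1: "b \<le> b1 / 2" using bb4 by linarith
  define S where "S = {z. F z = 0} \<inter> M"
  have xsS: "xs \<in> S" using xs_sol xs_M S_def by auto
  show ?thesis
  proof (intro exI[of _ "4 + 4 * L1 / \<gamma>"] conjI allI impI)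
    show "4 + 4 * L1 / \<gamma> > 0" using A1_pos A3_pos by (simp add: add_pos_pos)
  next
    fix x J d r
    assume xM: "x \<in> M \<inter> cball xs (b/2)" and Fx: "F x \<noteq> 0" and JB: "J \<in> B_jacobian F x"
      and eq: "(J ** tangent_proj M x + norm (F x) *\<^sub>R mat 1) *v d = - F x + r"
    define \<mu> where "\<mu> = norm (F x)"
    have mu: "\<mu> > 0" using Fx \<mu>_def by simp
    define A where "A = J ** tangent_proj M x + \<mu> *\<^sub>R mat 1"
    define B where "B = matrix_inv A"
    define D where "D = infdist x S"
    have dxs: "dist x xs \<le> b/2" using xM by (simp add: dist_commute)
    have x1: "x \<in> M \<inter> cball xs b1" using xM bb1 Bpos by (auto simp: dist_commute)
    have x2: "x \<in> M \<inter> cball xs b2" using xM bb2 Bpos by (auto simp: dist_commute)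
    have x3: "x \<in> M \<inter> cball xs b3" using xM bb3 Bpos by (auto simp: dist_commute)
    from A2[OF x2 Fx JB] have inv: "invertible A" and onB: "onorm ((*v) B) \<le> 1 / \<mu>"
      unfolding A_def B_def \<mu>_def by auto
    have Bn: "norm (B *v v) \<le> norm v / \<mu>" for v
    proof -
      have "norm (B *v v) \<le> onorm ((*v) B) * norm v" by (rule onorm) simp
      also have "\<dots> \<le> (1/\<mu>) * norm v" using mult_right_mono[OF onB norm_ge_zero[of v]] by simp
      finally show ?thesis by simp
    qed
    have BA: "B ** A = mat 1" using inv_props[OF inv] B_def by simp
    have dB: "d = B *v (- F x) + B *v r"
    proof -
      have "d = (B ** A) *v d" using BA by simp
      also have "\<dots> = B *v (- F x + r)" using eq by (simp add: matrix_vector_mul_assoc[symmetric] A_def \<mu>_def)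
      finally show ?thesis by (metis matrix_vector_right_distrib)
    qed
    have D3: "\<mu> \<ge> \<gamma> * D" using A3[OF x3] \<mu>_def D_def S_def by simp
    have Dle: "D \<le> b/2" using infdist_le[OF xsS, of x] dxs D_def by simp
    have D0: "D \<ge> 0" unfolding D_def by (rule infdist_nonneg)
    have Dpos: "D > 0"
    proof (rule ccontr)
      assume "\<not> D > 0"
      hence D00: "D = 0" using D0 by simp
      have epos: "min (\<mu> / (2 * L2)) (b/2) > 0" using mu A1_pos Bpos by simp
      obtain z where zS: "z \<in> S" and zd: "dist x z < D + min (\<mu> / (2 * L2)) (b/2)"
        using infdist_approx[OF _ epos, of S x] xsS D_def by auto
      have "dist z xs \<le> dist z x + dist x xs" by (rule dist_triangle)
      also have "\<dots> \<le> b1" using zd D00 dxs bb1 Bpos by (simp add: dist_commute)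
      finally have zc: "z \<in> cball xs b1" by (simp add: dist_commute)
      have xc: "x \<in> cball xs b1" using x1 by simp
      have "dist (F x) (F z) \<le> L2 * dist x z" using lipschitz_onD[OF A1_lip xc zc] .
      also have "\<dots> < L2 * (\<mu> / (2 * L2))"
        using zd D00 A1_pos by (intro mult_strict_left_mono) auto
      also have "\<dots> = \<mu> / 2" using A1_pos by simp
      finally show False using zS S_def \<mu>_def mu by (simp add: dist_norm)
    qed
    obtain z where zS: "z \<in> S" and zd: "dist x z < D + D"
      using infdist_approx[of S D x] xsS Dpos D_def by auto
    have z1: "z \<in> M \<inter> cball xs b1"
    proof -
      have "dist z xs \<le> dist z x + dist x xs" by (rule dist_triangle)
      also have "\<dots> \<le> b1" using zd Dle dxs bb1 Bpos by (simp add: dist_commute)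
      finally show ?thesis using zS S_def by (simp add: dist_commute)
    qed
    have Fz: "F z = 0" using zS S_def by simp
    define w where "w = x - z"
    define JP where "JP = J ** tangent_proj M x"
    define e where "e = F x - JP *v w"
    have en: "norm e \<le> L1 * (norm w)\<^sup>2"
    proof -
      have "norm (F z - F x - JP *v (z - x)) \<le> L1 * (norm (z - x))\<^sup>2"
        using A1_JP[OF x1 z1 JB] unfolding JP_def .
      moreover have "F z - F x - JP *v (z - x) = - e"
        using Fz unfolding e_def w_def by (simp add: matrix_vector_mult_diff_distrib algebra_simps)
      ultimately show ?thesis by (simp add: norm_minus_commute w_def)
    qed
    have JPv: "JP *v v = A *v v - \<mu> *\<^sub>R v" for v
      unfolding A_def JP_def by (simp add: matrix_vector_mult_add_rdistrib mat_scale_mult)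
    have Fxe: "F x = A *v w - \<mu> *\<^sub>R w + e" unfolding e_def JPv[of w] by simp
    have "B *v (F x) = B *v (A *v w) - \<mu> *\<^sub>R (B *v w) + B *v e"
      unfolding Fxe by (simp only: matrix_vector_right_distrib matrix_vector_mult_diff_distrib
             matrix_vector_mult_scaleR)
    also have "B *v (A *v w) = w" using BA by (simp add: matrix_vector_mul_assoc)
    finally have BF: "B *v (F x) = w - \<mu> *\<^sub>R (B *v w) + B *v e" .
    have nB1: "norm (\<mu> *\<^sub>R (B *v w)) \<le> norm w"
    proof -
      have "norm (\<mu> *\<^sub>R (B *v w)) = \<mu> * norm (B *v w)" using mu by simp
      also have "\<dots> \<le> \<mu> * (norm w / \<mu>)" using Bn[of w] mu by (intro mult_left_mono) auto
      finally show ?thesis using mu by simp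
    qed
    have nB2: "norm (B *v e) \<le> L1 * (norm w)\<^sup>2 / \<mu>"
      using Bn[of e] en mu by (meson divide_right_mono less_imp_le order_trans)
    have nBF: "norm (B *v (F x)) \<le> 2 * norm w + L1 * (norm w)\<^sup>2 / \<mu>"
    proof -
      have "norm (B *v (F x)) \<le> norm (w - \<mu> *\<^sub>R (B *v w)) + norm (B *v e)"
        unfolding BF by (rule norm_triangle_ineq)
      also have "norm (w - \<mu> *\<^sub>R (B *v w)) \<le> norm w + norm (\<mu> *\<^sub>R (B *v w))"
        by (rule norm_triangle_ineq4)
      finally show ?thesis using nB1 nB2 by simp
    qed
    have nw: "norm w < 2 * D" using zd w_def by (simp add: dist_norm)
    have "L1 * (norm w)\<^sup>2 / \<mu> \<le> L1 * (2 * D)\<^sup>2 / (\<gamma> * D)"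
    proof (rule frac_le)
      show "0 \<le> L1 * (2 * D)\<^sup>2" using A1_pos by simp
      show "L1 * (norm w)\<^sup>2 \<le> L1 * (2 * D)\<^sup>2"
        using nw A1_pos by (intro mult_left_mono power_mono) auto
      show "0 < \<gamma> * D" using A3_pos Dpos by simp
      show "\<gamma> * D \<le> \<mu>" using D3 .
    qed
    also have "L1 * (2 * D)\<^sup>2 / (\<gamma> * D) = 4 * L1 / \<gamma> * D"
      using Dpos A3_pos by (simp add: field_simps power2_eq_square)
    finally have q1: "L1 * (norm w)\<^sup>2 / \<mu> \<le> 4 * L1 / \<gamma> * D" .
    have "norm d \<le> norm (B *v (- F x)) + norm (B *v r)"
      unfolding dB by (rule norm_triangle_ineq)
    also have "norm (B *v (- F x)) = norm (B *v (F x))"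
      by (metis matrix_vector_mult_scaleR norm_minus_cancel scaleR_minus1_left)
    finally have "norm d \<le> 2 * norm w + 4 * L1 / \<gamma> * D + norm r / \<mu>"
      using nBF q1 Bn[of r] by linarith
    also have "\<dots> \<le> (4 + 4 * L1 / \<gamma>) * D + norm r / \<mu>"
      using nw by (simp add: algebra_simps)
    finally show "norm d \<le> (4 + 4 * L1 / \<gamma>) * infdist x ({z. F z = 0} \<inter> M) + norm r / norm (F x)"
      unfolding D_def S_def \<mu>_def .
  qed
qed

end
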